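(* Assume $\alpha=2$ and the far-destination approximation (every relay–destination distance equals $d$), and condition on there being exactly $N\ge1$ relays, i.i.d. uniform in the disc $\mathcal D$ of radius $R_{\mathcal D}$ centred at the source. With distributed beamforming by the set $\tilde{\mathcal S}=\{i: x_i>\epsilon\}$ of relays that decode, the destination SNR is $$SNR_{\tilde{\mathcal S}}=Px_0+\eta\sum_{i\in\tilde{\mathcal S}} y_i\,(Px_i-\tau),$$ and the outage probability is $\mathcal{P}_N(P)=\mathcal{P}\big(SNR_{\tilde{\mathcal S}}<\tau\big)$. Then distributed beamforming achieves the maximum diversity gain $N+1$: $-\lim_{P\to\infty}\frac{\log\mathcal{P}_N(P)}{\log P}=N+1$.
   Context: Source at origin, destination at distance $d>0$. For relay $i$ with source distance $d_i$: $x_i=|h_i|^2/(1+d_i^2)$, $y_i=|g_i|^2/(1+d^2)$; $x_0=|h_d|^2/(1+d^2)$; all fading coefficients $h_d,h_i,g_i$ are independent $\mathcal{CN}(0,1)$ and independent of locations. Transmit power $P>0$, target rate $R>0$, $\tau=2^{2R}-1$, $\epsilon=\tau/P$, energy harvesting efficiency $\eta\in(0,1]$ (relay $i$, if $x_i>\epsilon$, has harvested power $\eta(Px_i-\tau)$). Outage means $\tfrac12\log_2(1+SNR_{\tilde{\mathcal S}})<R$. *)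

theory Defs
  imports "HOL-Probability.Probability"
begin

definition CN01 :: "complex measure" where
  "CN01 = density lborel (\<lambda>z. ennreal (exp (- (cmod z)\<^sup>2) / pi))"

text \<open>Uniform distribution on the disc of radius RD centred at the source (origin).\<close>
definition uniform_disc :: "real \<Rightarrow> complex measure" where
  "uniform_disc RD = uniform_measure lborel (cball 0 RD)"

text \<open>Per-relay randomness: (position p_i, fading h_i, fading g_i); all independent.\<close>
definition relay_measure :: "real \<Rightarrow> (complex \<times> complex \<times> complex) measure" where
  "relay_measure RD = uniform_disc RD \<Otimes>\<^sub>M (CN01 \<Otimes>\<^sub>M CN01)"

text \<open>Full sample space given exactly N relays: (h_d, (relay data)_{i<N}), i.i.d. relays.\<close>
definition system_measure :: "nat \<Rightarrow> real \<Rightarrow>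
    (complex \<times> (nat \<Rightarrow> complex \<times> complex \<times> complex)) measure" where
  "system_measure N RD = CN01 \<Otimes>\<^sub>M (\<Pi>\<^sub>M i\<in>{..<N}. relay_measure RD)"

text \<open>Channel gains with path-loss exponent alpha = 2 and far-destination approximation.\<close>
definition xgain :: "complex \<times> complex \<times> complex \<Rightarrow> real" where
  "xgain r = (cmod (fst (snd r)))\<^sup>2 / (1 + (cmod (fst r))\<^sup>2)"

definition ygain :: "real \<Rightarrow> complex \<times> complex \<times> complex \<Rightarrow> real" where
  "ygain d r = (cmod (snd (snd r)))\<^sup>2 / (1 + d\<^sup>2)"

definition x0gain :: "real \<Rightarrow> complex \<Rightarrow> real" where
  "x0gain d h0 = (cmod h0)\<^sup>2 / (1 + d\<^sup>2)"

text \<open>Destination SNR under distributed beamforming by the decoding set {i. x_i > eps}, eps = tau/P.\<close>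
definition SNR_DBF :: "nat \<Rightarrow> real \<Rightarrow> real \<Rightarrow> real \<Rightarrow> real \<Rightarrow>
    complex \<times> (nat \<Rightarrow> complex \<times> complex \<times> complex) \<Rightarrow> real" where
  "SNR_DBF N d \<eta> \<tau> P \<omega> =
     P * x0gain d (fst \<omega>)
     + \<eta> * (\<Sum>i\<in>{i. i < N \<and> xgain (snd \<omega> i) > \<tau> / P}.
              ygain d (snd \<omega> i) * (P * xgain (snd \<omega> i) - \<tau>))"

definition outage_prob :: "nat \<Rightarrow> real \<Rightarrow> real \<Rightarrow> real \<Rightarrow> real \<Rightarrow> real \<Rightarrow> real" where
  "outage_prob N RD d \<eta> R P =
     (let \<tau> = 2 powr (2 * R) - 1 in
      measure (system_measure N RD)
        {\<omega> \<in> space (system_measure N RD). SNR_DBF N d \<eta> \<tau> P \<omega> < \<tau>})"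

end

theory Submission
  imports Defs
begin

lemma gauss1: "(\<integral>\<^sup>+x. ennreal (exp (- x\<^sup>2) / sqrt pi) \<partial>lborel) = 1"
proof -
  have eq: "normal_density 0 (1 / sqrt 2) x = exp (- x\<^sup>2) / sqrt pi" for x
    by (simp add: normal_density_def power_divide)
  have "(\<integral>\<^sup>+x. ennreal (normal_density 0 (1 / sqrt 2) x) \<partial>lborel) = ennreal 1"
    by (subst nn_integral_eq_integral) auto
  then show ?thesis by (simp add: eq)
qed

lemma CN01_total: "(\<integral>\<^sup>+z. ennreal (exp (- (cmod z)\<^sup>2) / pi) \<partial>lborel) = 1"
proof -
  let ?g = "\<lambda>(b::complex) x::real. ennreal (exp (- x\<^sup>2) / sqrt pi)"
  have "(\<lambda>z::complex. ennreal (exp (- (cmod z)\<^sup>2) / pi)) = (\<lambda>z. \<Prod>b\<in>Basis. ?g b (z \<bullet> b))"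
  proof
    fix z :: complex
    have "(\<Prod>b\<in>Basis. ?g b (z \<bullet> b)) = ?g 1 (Re z) * ?g \<i> (Im z)"
      by (simp add: Basis_complex_def inner_complex_def)
    also have "\<dots> = ennreal (exp (- (Re z)\<^sup>2) / sqrt pi * (exp (- (Im z)\<^sup>2) / sqrt pi))"
      by (subst ennreal_mult[symmetric]) auto
    also have "\<dots> = ennreal (exp (- (cmod z)\<^sup>2) / pi)"
    proof -
      have c: "(cmod z)\<^sup>2 = (Re z)\<^sup>2 + (Im z)\<^sup>2" by (simp add: cmod_power2)
      have e: "exp (- (cmod z)\<^sup>2) = exp (- (Re z)\<^sup>2) * exp (- (Im z)\<^sup>2)"
        unfolding c by (simp add: exp_add[symmetric])
      have s: "sqrt pi * sqrt pi = pi" by simp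
      have "exp (- (Re z)\<^sup>2) / sqrt pi * (exp (- (Im z)\<^sup>2) / sqrt pi)
         = exp (- (Re z)\<^sup>2) * exp (- (Im z)\<^sup>2) / (sqrt pi * sqrt pi)" by simp
      then show ?thesis unfolding e s by simp
    qed
    finally show "ennreal (exp (- (cmod z)\<^sup>2) / pi) = (\<Prod>b\<in>Basis. ?g b (z \<bullet> b))" ..
  qed
  then have "(\<integral>\<^sup>+z. ennreal (exp (- (cmod z)\<^sup>2) / pi) \<partial>lborel) = (\<integral>\<^sup>+z. (\<Prod>b\<in>Basis. ?g b (z \<bullet> b)) \<partial>lborel)"
    by simp
  also have "\<dots> = (\<Prod>b\<in>(Basis::complex set). (\<integral>\<^sup>+x. ?g b x \<partial>lborel))"
    by (rule nn_integral_lborel_prod) auto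
  also have "\<dots> = 1" by (simp add: gauss1)
  finally show ?thesis .
qed

lemma CN01_prob: "prob_space CN01"
  by (rule prob_spaceI) (simp add: CN01_def emeasure_density CN01_total)

lemma lborel_ball_complex: "r \<ge> 0 \<Longrightarrow> emeasure lborel (ball (0::complex) r) = ennreal (pi * r\<^sup>2)"
  by (simp add: emeasure_ball unit_ball_vol_2)

lemma CN01_ball_emeasure:
  "emeasure CN01 (ball 0 r) = (\<integral>\<^sup>+z. ennreal (exp (- (cmod z)\<^sup>2) / pi) * indicator (ball 0 r) z \<partial>lborel)"
  unfolding CN01_def by (subst emeasure_density) auto

lemma CN01_ball_upper:
  assumes "r \<ge> 0" shows "measure CN01 (ball 0 r) \<le> r\<^sup>2"
proof -
  interpret prob_space CN01 by (rule CN01_prob)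
  have "emeasure CN01 (ball 0 r) \<le> (\<integral>\<^sup>+z. ennreal (1 / pi) * indicator (ball (0::complex) r) z \<partial>lborel)"
    unfolding CN01_ball_emeasure
    by (intro nn_integral_mono) (auto split: split_indicator intro!: ennreal_leI divide_right_mono)
  also have "\<dots> = ennreal (1/pi) * emeasure lborel (ball (0::complex) r)"
    by (rule nn_integral_cmult_indicator) auto
  also have "\<dots> = ennreal (r\<^sup>2)"
    using assms by (simp add: lborel_ball_complex ennreal_mult[symmetric])
  finally show ?thesis using assms by (simp add: emeasure_eq_measure)
qed

lemma CN01_ball_lower:
  assumes "r \<ge> 0" shows "exp (- r\<^sup>2) * r\<^sup>2 \<le> measure CN01 (ball 0 r)"
proof -
  interpret prob_space CN01 by (rule CN01_prob)
  have "(\<integral>\<^sup>+z. ennreal (exp (- r\<^sup>2) / pi) * indicator (ball (0::complex) r) z \<partial>lborel) \<le> emeasure CN01 (ball 0 r)"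
    unfolding CN01_ball_emeasure
  proof (intro nn_integral_mono)
    fix z :: complex
    show "ennreal (exp (- r\<^sup>2) / pi) * indicator (ball 0 r) z \<le> ennreal (exp (- (cmod z)\<^sup>2) / pi) * indicator (ball 0 r) z"
    proof (cases "z \<in> ball 0 r")
      case True
      then have "cmod z \<le> r" by simp
      then have "(cmod z)\<^sup>2 \<le> r\<^sup>2" by (simp add: power_mono)
      then have "exp (- r\<^sup>2) / pi \<le> exp (- (cmod z)\<^sup>2) / pi" by (simp add: divide_right_mono)
      then show ?thesis using True by (simp add: ennreal_leI)
    qed simp
  qed
  moreover have "(\<integral>\<^sup>+z. ennreal (exp (- r\<^sup>2) / pi) * indicator (ball (0::complex) r) z \<partial>lborel) = ennreal (exp (- r\<^sup>2) * r\<^sup>2)"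
    using assms by (subst nn_integral_cmult_indicator) (auto simp: lborel_ball_complex ennreal_mult[symmetric])
  ultimately show ?thesis using assms by (simp add: emeasure_eq_measure)
qed

lemma disc_emeasure: "RD > 0 \<Longrightarrow> emeasure lborel (cball (0::complex) RD) = ennreal (pi * RD\<^sup>2)"
  by (simp add: emeasure_cball unit_ball_vol_2)

lemma disc_prob: "RD > 0 \<Longrightarrow> prob_space (uniform_disc RD)"
  unfolding uniform_disc_def by (rule prob_space_uniform_measure) (auto simp: disc_emeasure)

lemma disc_cball: "RD > 0 \<Longrightarrow> measure (uniform_disc RD) (cball 0 RD) = 1"
  unfolding uniform_disc_def measure_def
  by (subst emeasure_uniform_measure_1) (auto simp: disc_emeasure)

lemma disc_outside: "RD > 0 \<Longrightarrow> measure (uniform_disc RD) (- cball 0 RD) = 0"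
  unfolding uniform_disc_def using disc_emeasure[of RD]
  by (subst measure_uniform_measure) (auto simp: disc_emeasure)

lemma relay_prob: "RD > 0 \<Longrightarrow> prob_space (relay_measure RD)"
  unfolding relay_measure_def by (intro prob_space_pair disc_prob CN01_prob)

lemma system_prob: "RD > 0 \<Longrightarrow> prob_space (system_measure N RD)"
  unfolding system_measure_def by (intro prob_space_pair prob_space_PiM relay_prob CN01_prob)

lemma measure_pair_times:
  assumes "prob_space M1" "prob_space M2" "A \<in> sets M1" "B \<in> sets M2"
  shows "measure (M1 \<Otimes>\<^sub>M M2) (A \<times> B) = measure M1 A * measure M2 B"
proof -
  interpret M1: prob_space M1 by fact
  interpret M2: prob_space M2 by fact
  interpret pair_prob_space M1 M2 ..
  have "emeasure (M1 \<Otimes>\<^sub>M M2) (A \<times> B) = emeasure M1 A * emeasure M2 B"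
    using assms by (simp add: M2.emeasure_pair_measure_Times)
  then show ?thesis
    by (simp add: M1.emeasure_eq_measure M2.emeasure_eq_measure P.emeasure_eq_measure ennreal_mult[symmetric])
qed

lemma measure_PiM_const:
  assumes "prob_space M" "\<And>i. i \<in> I \<Longrightarrow> B \<in> sets M" "finite I"
  shows "measure (PiM I (\<lambda>_. M)) (PiE I (\<lambda>_. B)) = measure M B ^ card I"
proof -
  interpret M: prob_space M by fact
  interpret finite_product_prob_space "\<lambda>_. M" I
    by (intro finite_product_prob_space.intro finite_product_sigma_finite.intro
        finite_product_sigma_finite_axioms.intro product_prob_space.intro product_sigma_finite.intro
        product_prob_space_axioms.intro) (auto simp: assms M.sigma_finite_measure M.prob_space_axioms)
  have "emeasure (PiM I (\<lambda>_. M)) (PiE I (\<lambda>_. B)) = (\<Prod>i\<in>I. emeasure M B)"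
    using assms by (simp add: measure_times)
  then have "ennreal (measure (PiM I (\<lambda>_. M)) (PiE I (\<lambda>_. B))) = ennreal (measure M B ^ card I)"
    by (simp add: M.emeasure_eq_measure emeasure_eq_measure prod_ennreal ennreal_power)
  then show ?thesis by (simp add: ennreal_inj)
qed

lemma sets_relay: "sets (relay_measure RD) = sets (borel \<Otimes>\<^sub>M (borel \<Otimes>\<^sub>M borel))"
  unfolding relay_measure_def uniform_disc_def CN01_def
  by (intro sets_pair_measure_cong) auto

lemma sets_system: "sets (system_measure N RD) = sets (borel \<Otimes>\<^sub>M (\<Pi>\<^sub>M i\<in>{..<N}. (borel \<Otimes>\<^sub>M (borel \<Otimes>\<^sub>M borel))))"
  unfolding system_measure_def
  by (intro sets_pair_measure_cong sets_PiM_cong) (auto simp: CN01_def sets_relay)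

lemma SNR_alt: "SNR_DBF N d \<eta> \<tau> P \<omega> = P * x0gain d (fst \<omega>)
     + \<eta> * (\<Sum>i<N. if xgain (snd \<omega> i) > \<tau> / P then ygain d (snd \<omega> i) * (P * xgain (snd \<omega> i) - \<tau>) else 0)"
proof -
  let ?g = "\<lambda>i. ygain d (snd \<omega> i) * (P * xgain (snd \<omega> i) - \<tau>)"
  have "(\<Sum>i\<in>{i. i < N \<and> xgain (snd \<omega> i) > \<tau> / P}. ?g i) = (\<Sum>i\<in>{i\<in>{..<N}. xgain (snd \<omega> i) > \<tau> / P}. ?g i)"
    by (intro sum.cong) auto
  also have "\<dots> = (\<Sum>i<N. if xgain (snd \<omega> i) > \<tau> / P then ?g i else 0)"
    by (rule sum.inter_filter) simp
  finally show ?thesis unfolding SNR_DBF_def by simp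
qed

lemma SNR_meas: "SNR_DBF N d \<eta> \<tau> P \<in> borel_measurable (system_measure N RD)"
proof -
  have "(\<lambda>\<omega>. P * x0gain d (fst \<omega>)
     + \<eta> * (\<Sum>i<N. if xgain (snd \<omega> i) > \<tau> / P then ygain d (snd \<omega> i) * (P * xgain (snd \<omega> i) - \<tau>) else 0))
     \<in> borel_measurable (borel \<Otimes>\<^sub>M (\<Pi>\<^sub>M i\<in>{..<N}. (borel \<Otimes>\<^sub>M (borel \<Otimes>\<^sub>M borel))))"
    unfolding xgain_def ygain_def x0gain_def by measurable
  then show ?thesis
    by (subst measurable_cong_sets[OF sets_system refl]) (simp add: SNR_alt[abs_def])
qed

lemma cover:
  fixes u a b :: real and k :: nat
  assumes u: "0 < u" "u \<le> 1" and k: "k \<ge> 1" and ab: "a \<ge> 0" "b \<ge> 0" "a * b < u"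
  shows "a < u \<or> b < u \<or> (\<exists>j<k. a < u powr (real j / k) \<and> b < u / u powr (real (Suc j) / k))"
proof (rule ccontr)
  define t where "t j = u powr (real j / k)" for j
  assume "\<not> ?thesis"
  then have au: "u \<le> a" and bu: "u \<le> b" and n3: "\<not> (\<exists>j<k. a < t j \<and> b < u / t (Suc j))"
    by (auto simp: t_def not_less)
  have H: "t j \<le> a \<or> u / t (Suc j) \<le> b" if "j < k" for j
    using n3 that by (meson not_less)
  have apos: "a > 0" using au u by simp
  have tpos: "t j > 0" for j using u by (simp add: t_def)
  have blt: "b < u / a" using ab apos by (simp add: field_simps)
  have "\<forall>i \<le> k. t (k - i) \<le> a"
  proof (intro allI impI)
    fix i assume "i \<le> k"
    then show "t (k - i) \<le> a"
    proof (induction i)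
      case 0
      then show ?case using au k u by (simp add: t_def)
    next
      case (Suc i)
      then have IH: "t (k - i) \<le> a" by simp
      have j: "k - Suc i < k" "Suc (k - Suc i) = k - i" using Suc.prems by auto
      have "u / a \<le> u / t (k - i)" using IH tpos[of "k - i"] u apos by (intro divide_left_mono) auto
      then have "\<not> u / t (Suc (k - Suc i)) \<le> b" using blt j by simp
      then show ?case using H[OF j(1)] by auto
    qed
  qed
  then have "t 0 \<le> a" by (metis diff_self_eq_0 order_refl)
  then have "1 \<le> a" using u by (simp add: t_def)
  then have "u / a \<le> u" using u by (simp add: field_simps)
  then show False using blt bu by simp
qed

lemma rect_exp:
  fixes u :: real and k :: nat
  assumes "0 < u" "k \<ge> 1"
  shows "u powr (real j / k) * (u / u powr (real (Suc j) / k)) = u powr (1 - 1 / k)"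
proof -
  have "u powr (real j / k) * (u / u powr (real (Suc j) / k)) = u powr (real j / k + 1 - real (Suc j) / k)"
    using assms by (simp add: powr_add powr_diff)
  also have "real j / k + 1 - real (Suc j) / k = 1 - 1 / k" using assms by (simp add: field_simps)
  finally show ?thesis .
qed

lemma sets_CN01[simp]: "sets CN01 = sets borel"
  by (simp add: CN01_def)

lemma space_CN01[simp]: "space CN01 = UNIV"
  by (simp add: CN01_def)

lemma mem_ball_sqrt: "s \<ge> 0 \<Longrightarrow> (h \<in> ball (0::complex) (sqrt s)) \<longleftrightarrow> (cmod h)\<^sup>2 < s"
  by (metis dist_0_norm mem_ball norm_ge_zero real_sqrt_abs real_sqrt_less_iff abs_of_nonneg)

lemma CN01_sq: "s \<ge> 0 \<Longrightarrow> measure CN01 (ball 0 (sqrt s)) \<le> s"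
  using CN01_ball_upper[of "sqrt s"] by simp

lemma CN01_sq_lower: "s \<ge> 0 \<Longrightarrow> exp (- s) * s \<le> measure CN01 (ball 0 (sqrt s))"
  using CN01_ball_lower[of "sqrt s"] by simp

definition Wset :: "real \<Rightarrow> real \<Rightarrow> nat \<Rightarrow> (complex \<times> complex) set" where
  "Wset s u k = ball 0 (sqrt s) \<times> UNIV \<union> ball 0 (sqrt u) \<times> UNIV \<union> UNIV \<times> ball 0 (sqrt u) \<union>
     (\<Union>j<k. ball 0 (sqrt (u powr (real j / k))) \<times> ball 0 (sqrt (u / u powr (real (Suc j) / k))))"

lemma Wset_sets: "Wset s u k \<in> sets (CN01 \<Otimes>\<^sub>M CN01)"
  unfolding Wset_def by (intro sets.Un sets.finite_UN pair_measureI) auto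

lemma W_bound:
  assumes k: "k \<ge> 1" and u: "0 < u" "u \<le> 1" and s: "s \<ge> 0"
  shows "measure (CN01 \<Otimes>\<^sub>M CN01) (Wset s u k) \<le> s + 2 * u + k * u powr (1 - 1 / k)"
proof -
  interpret C: prob_space CN01 by (rule CN01_prob)
  interpret pair_prob_space CN01 CN01 ..
  let ?M = "CN01 \<Otimes>\<^sub>M CN01"
  have m: "measure ?M (A \<times> B) = measure CN01 A * measure CN01 B" if "A \<in> sets borel" "B \<in> sets borel" for A B
    using that by (intro measure_pair_times CN01_prob) auto
  have one: "measure CN01 UNIV = 1" using C.prob_space by simp
  have b1: "measure ?M (ball 0 (sqrt s) \<times> UNIV) \<le> s" using s by (simp add: m one CN01_sq)
  have b2: "measure ?M (ball 0 (sqrt u) \<times> UNIV) \<le> u" using u by (simp add: m one CN01_sq)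
  have b3: "measure ?M (UNIV \<times> ball 0 (sqrt u)) \<le> u" using u by (simp add: m one CN01_sq)
  have b4: "measure ?M (ball 0 (sqrt (u powr (real j / k))) \<times> ball 0 (sqrt (u / u powr (real (Suc j) / k))))
      \<le> u powr (1 - 1 / k)" for j
  proof -
    have "measure ?M (ball 0 (sqrt (u powr (real j / k))) \<times> ball 0 (sqrt (u / u powr (real (Suc j) / k))))
      = measure CN01 (ball 0 (sqrt (u powr (real j / k)))) * measure CN01 (ball 0 (sqrt (u / u powr (real (Suc j) / k))))"
      by (simp add: m)
    also have "\<dots> \<le> u powr (real j / k) * (u / u powr (real (Suc j) / k))"
      using u by (intro mult_mono CN01_sq) auto
    also have "\<dots> = u powr (1 - 1 / k)" by (rule rect_exp[OF u(1) k])
    finally show ?thesis .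
  qed
  have "measure ?M (\<Union>j<k. ball 0 (sqrt (u powr (real j / k))) \<times> ball 0 (sqrt (u / u powr (real (Suc j) / k))))
      \<le> (\<Sum>j<k. measure ?M (ball 0 (sqrt (u powr (real j / k))) \<times> ball 0 (sqrt (u / u powr (real (Suc j) / k)))))"
    by (intro measure_UNION_le) auto
  also have "\<dots> \<le> (\<Sum>j<k. u powr (1 - 1 / k))" by (intro sum_mono b4)
  also have "\<dots> = k * u powr (1 - 1 / k)" by simp
  finally have b5: "measure ?M (\<Union>j<k. ball 0 (sqrt (u powr (real j / k))) \<times> ball 0 (sqrt (u / u powr (real (Suc j) / k)))) \<le> k * u powr (1 - 1 / k)" .
  define X1 where "X1 = ball (0::complex) (sqrt s) \<times> (UNIV::complex set)"
  define X2 where "X2 = ball (0::complex) (sqrt u) \<times> (UNIV::complex set)"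
  define X3 where "X3 = (UNIV::complex set) \<times> ball (0::complex) (sqrt u)"
  define X4 where "X4 = (\<Union>j<k. ball (0::complex) (sqrt (u powr (real j / k))) \<times> ball (0::complex) (sqrt (u / u powr (real (Suc j) / k))))"
  have S: "X1 \<in> sets ?M" "X2 \<in> sets ?M" "X3 \<in> sets ?M" "X4 \<in> sets ?M"
    unfolding X1_def X2_def X3_def X4_def by (intro sets.Un sets.finite_UN pair_measureI; auto)+
  have "measure ?M (X1 \<union> X2 \<union> X3 \<union> X4) \<le> measure ?M (X1 \<union> X2 \<union> X3) + measure ?M X4"
    using S by (intro measure_Un_le) auto
  also have "measure ?M (X1 \<union> X2 \<union> X3) \<le> measure ?M (X1 \<union> X2) + measure ?M X3"
    using S by (intro measure_Un_le) auto
  also have "measure ?M (X1 \<union> X2) \<le> measure ?M X1 + measure ?M X2"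
    using S by (intro measure_Un_le) auto
  finally have "measure ?M (X1 \<union> X2 \<union> X3 \<union> X4) \<le> s + 2 * u + k * u powr (1 - 1 / k)"
    using b1 b2 b3 b5 unfolding X1_def X2_def X3_def X4_def by linarith
  then show ?thesis unfolding Wset_def X1_def X2_def X3_def X4_def .
qed

lemma space_relay[simp]: "space (relay_measure RD) = UNIV"
  by (simp add: relay_measure_def uniform_disc_def space_pair_measure)

lemma space_system: "space (system_measure N RD) = UNIV \<times> PiE {..<N} (\<lambda>_. UNIV)"
  by (simp add: system_measure_def space_pair_measure space_PiM)

lemma sets_disc[simp]: "sets (uniform_disc RD) = sets borel"
  by (simp add: uniform_disc_def)

lemma xgain_le: "xgain r \<le> (cmod (fst (snd r)))\<^sup>2"
proof -
  have "(cmod (fst (snd r)))\<^sup>2 / (1 + (cmod (fst r))\<^sup>2) \<le> (cmod (fst (snd r)))\<^sup>2 / 1"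
    by (intro divide_left_mono) (auto simp: add_pos_nonneg)
  then show ?thesis unfolding xgain_def by simp
qed

lemma xgain_nonneg: "xgain r \<ge> 0" unfolding xgain_def by simp
lemma ygain_nonneg: "ygain d r \<ge> 0" unfolding ygain_def by simp

lemma system_measure_prod:
  assumes RD: "RD > 0" and A: "A \<in> sets borel" and B: "B \<in> sets (relay_measure RD)"
  shows "measure (system_measure N RD) (A \<times> PiE {..<N} (\<lambda>_. B)) = measure CN01 A * measure (relay_measure RD) B ^ N"
proof -
  have pm: "prob_space (PiM {..<N} (\<lambda>_. relay_measure RD))" by (intro prob_space_PiM relay_prob RD)
  have ps: "PiE {..<N} (\<lambda>_. B) \<in> sets (PiM {..<N} (\<lambda>_. relay_measure RD))"
    by (rule sets_PiM_I_finite) (use B in auto)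
  have A': "A \<in> sets CN01" using A by simp
  have "measure (system_measure N RD) (A \<times> PiE {..<N} (\<lambda>_. B)) = measure CN01 A * measure (PiM {..<N} (\<lambda>_. relay_measure RD)) (PiE {..<N} (\<lambda>_. B))"
    unfolding system_measure_def by (rule measure_pair_times[OF CN01_prob pm A' ps])
  also have "measure (PiM {..<N} (\<lambda>_. relay_measure RD)) (PiE {..<N} (\<lambda>_. B)) = measure (relay_measure RD) B ^ card {..<N}"
    by (rule measure_PiM_const[OF relay_prob[OF RD]]) (use B in auto)
  finally show ?thesis by simp
qed

lemma relay_measure_prod:
  assumes RD: "RD > 0" and A: "A \<in> sets borel" and B: "B \<in> sets borel" and C: "C \<in> sets borel"
  shows "measure (relay_measure RD) (A \<times> (B \<times> C)) = measure (uniform_disc RD) A * (measure CN01 B * measure CN01 C)"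
proof -
  have BC: "B \<times> C \<in> sets (CN01 \<Otimes>\<^sub>M CN01)" using B C by (intro pair_measureI) auto
  have A': "A \<in> sets (uniform_disc RD)" using A by simp
  have B': "B \<in> sets CN01" "C \<in> sets CN01" using B C by auto
  have "measure (relay_measure RD) (A \<times> (B \<times> C)) = measure (uniform_disc RD) A * measure (CN01 \<Otimes>\<^sub>M CN01) (B \<times> C)"
    unfolding relay_measure_def by (rule measure_pair_times[OF disc_prob[OF RD] prob_space_pair[OF CN01_prob CN01_prob] A' BC])
  also have "measure (CN01 \<Otimes>\<^sub>M CN01) (B \<times> C) = measure CN01 B * measure CN01 C"
    by (rule measure_pair_times[OF CN01_prob CN01_prob B'])
  finally show ?thesis .
qed

lemma outage_lower:
  assumes RD: "RD > 0" and tau: "\<tau> > 0" and P: "P > 0" and h1: "\<tau> * (1 + d\<^sup>2) / P \<le> 1" and h2: "\<tau> / P \<le> 1"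
  shows "exp (-1) * (\<tau> * (1 + d\<^sup>2) / P) * (exp (-1) * (\<tau> / P) * exp (-1)) ^ N
     \<le> measure (system_measure N RD) {\<omega> \<in> space (system_measure N RD). SNR_DBF N d \<eta> \<tau> P \<omega> < \<tau>}"
proof -
  interpret S: prob_space "system_measure N RD" using system_prob[OF RD] .
  define s0 where "s0 = \<tau> * (1 + d\<^sup>2) / P"
  define s1 where "s1 = \<tau> / P"
  have s0: "s0 \<ge> 0" "s0 \<le> 1" using tau P h1 by (auto simp: s0_def)
  have s1: "s1 \<ge> 0" "s1 \<le> 1" using tau P h2 by (auto simp: s1_def)
  define B where "B = cball (0::complex) RD \<times> (ball (0::complex) (sqrt s1) \<times> ball (0::complex) (sqrt 1))"
  define L where "L = ball (0::complex) (sqrt s0) \<times> PiE {..<N} (\<lambda>_. B)"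
  have sub: "L \<subseteq> {\<omega> \<in> space (system_measure N RD). SNR_DBF N d \<eta> \<tau> P \<omega> < \<tau>}"
  proof
    fix \<omega> assume w: "\<omega> \<in> L"
    have w1: "fst \<omega> \<in> ball 0 (sqrt s0)" and w2: "snd \<omega> \<in> PiE {..<N} (\<lambda>_. B)"
      using w unfolding L_def mem_Times_iff by blast+
    have sp: "\<omega> \<in> space (system_measure N RD)"
      unfolding space_system mem_Times_iff using w2 PiE_mono[of "{..<N}" "\<lambda>_. B" "\<lambda>_. UNIV"] by blast
    have lt: "xgain (snd \<omega> i) < \<tau> / P" if "i < N" for i
    proof -
      have "snd \<omega> i \<in> B" using PiE_mem[OF w2] that by blast
      then have "fst (snd (snd \<omega> i)) \<in> ball 0 (sqrt s1)" unfolding B_def mem_Times_iff by blast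
      then have "(cmod (fst (snd (snd \<omega> i))))\<^sup>2 < s1" using s1 mem_ball_sqrt by blast
      then show ?thesis using xgain_le[of "snd \<omega> i"] unfolding s1_def by linarith
    qed
    have empty: "{i. i < N \<and> xgain (snd \<omega> i) > \<tau> / P} = {}"
      using lt by (auto dest: less_asym)
    have "(cmod (fst \<omega>))\<^sup>2 < s0" using s0 mem_ball_sqrt w1 by blast
    then have "P * (cmod (fst \<omega>))\<^sup>2 < P * s0" using P by simp
    also have "P * s0 = \<tau> * (1 + d\<^sup>2)" using P unfolding s0_def by simp
    finally have "P * (cmod (fst \<omega>))\<^sup>2 / (1 + d\<^sup>2) < \<tau>"
      by (simp add: divide_less_eq add_pos_nonneg)
    then have "P * x0gain d (fst \<omega>) < \<tau>" unfolding x0gain_def by simp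
    then show "\<omega> \<in> {\<omega> \<in> space (system_measure N RD). SNR_DBF N d \<eta> \<tau> P \<omega> < \<tau>}"
      using sp by (simp add: SNR_DBF_def empty)
  qed
  have meas: "{\<omega> \<in> space (system_measure N RD). SNR_DBF N d \<eta> \<tau> P \<omega> < \<tau>} \<in> sets (system_measure N RD)"
    using SNR_meas by measurable
  have Bsets: "B \<in> sets (relay_measure RD)" unfolding B_def sets_relay by (intro pair_measureI) auto
  have mB: "measure (relay_measure RD) B = measure CN01 (ball 0 (sqrt s1)) * measure CN01 (ball 0 (sqrt 1))"
    unfolding B_def by (subst relay_measure_prod[OF RD]) (auto simp: RD disc_cball)
  have mL: "measure (system_measure N RD) L = measure CN01 (ball 0 (sqrt s0)) * measure (relay_measure RD) B ^ N"
    unfolding L_def by (rule system_measure_prod[OF RD _ Bsets]) auto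
  have l0: "exp (-1) * s0 \<le> measure CN01 (ball 0 (sqrt s0))"
    using s0 by (intro order_trans[OF mult_right_mono CN01_sq_lower]) auto
  have l1: "exp (-1) * s1 \<le> measure CN01 (ball 0 (sqrt s1))"
    using s1 by (intro order_trans[OF mult_right_mono CN01_sq_lower]) auto
  have l2: "exp (-1) \<le> measure CN01 (ball 0 (sqrt 1))"
    using CN01_sq_lower[of 1] by simp
  have "exp (-1) * s1 * exp (-1) \<le> measure (relay_measure RD) B"
    unfolding mB using l1 l2 s1 by (intro mult_mono) auto
  then have "(exp (-1) * s1 * exp (-1)) ^ N \<le> measure (relay_measure RD) B ^ N"
    using s1 by (intro power_mono) auto
  then have "exp (-1) * s0 * (exp (-1) * s1 * exp (-1)) ^ N \<le> measure (system_measure N RD) L"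
    unfolding mL using l0 s0 s1 by (intro mult_mono) auto
  also have "\<dots> \<le> measure (system_measure N RD) {\<omega> \<in> space (system_measure N RD). SNR_DBF N d \<eta> \<tau> P \<omega> < \<tau>}"
    using sub meas by (rule S.finite_measure_mono)
  finally show ?thesis unfolding s0_def s1_def .
qed

lemma Wset_borel: "Wset s u k \<in> sets (borel \<Otimes>\<^sub>M borel)"
  unfolding Wset_def by (intro sets.Un sets.finite_UN pair_measureI) auto

lemma in_Wset:
  fixes h g :: complex
  assumes k: "k \<ge> 1" and u: "0 < u" "u \<le> 1" and s: "s \<ge> 0"
    and H: "(cmod h)\<^sup>2 < s \<or> (cmod h)\<^sup>2 * (cmod g)\<^sup>2 < u"
  shows "(h, g) \<in> Wset s u k"
proof -
  have tnn: "u powr (real j / k) \<ge> 0" "u / u powr (real (Suc j) / k) \<ge> 0" for j using u by auto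
  show ?thesis
  proof (cases "(cmod h)\<^sup>2 < s")
    case True
    then have "h \<in> ball 0 (sqrt s)" using mem_ball_sqrt s by blast
    then show ?thesis unfolding Wset_def by blast
  next
    case False
    then have ab: "(cmod h)\<^sup>2 * (cmod g)\<^sup>2 < u" using H by blast
    from cover[OF u k _ _ ab] consider "(cmod h)\<^sup>2 < u" | "(cmod g)\<^sup>2 < u"
      | j where "j < k" "(cmod h)\<^sup>2 < u powr (real j / k)" "(cmod g)\<^sup>2 < u / u powr (real (Suc j) / k)"
      by auto
    then show ?thesis
    proof cases
      case 1
      then have "h \<in> ball 0 (sqrt u)" using mem_ball_sqrt u by (meson less_imp_le)
      then show ?thesis unfolding Wset_def by blast
    next
      case 2
      then have "g \<in> ball 0 (sqrt u)" using mem_ball_sqrt u by (meson less_imp_le)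
      then show ?thesis unfolding Wset_def by blast
    next
      case 3
      then have "h \<in> ball 0 (sqrt (u powr (real j / k)))" "g \<in> ball 0 (sqrt (u / u powr (real (Suc j) / k)))"
        using mem_ball_sqrt tnn by blast+
      then show ?thesis unfolding Wset_def using \<open>j < k\<close> by blast
    qed
  qed
qed

lemma relay_arith:
  fixes a b p2 P \<tau> \<eta> K D :: real
  assumes P: "P > 0" and tau: "\<tau> > 0" and eta: "\<eta> > 0" and D: "D > 0" and a: "a \<ge> 0" and b: "b \<ge> 0"
    and p2: "0 \<le> p2" "1 + p2 \<le> K" and as: "a \<ge> 2 * K * \<tau> / P"
  shows "a / (1 + p2) > \<tau> / P"
    and "\<eta> * (b / D * (P * (a / (1 + p2)) - \<tau>)) < \<tau> \<Longrightarrow> a * b < 2 * K * D * \<tau> / (\<eta> * P)"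
proof -
  have K: "K > 0" using p2 by linarith
  have x: "a / (1 + p2) \<ge> a / K" using p2 a K by (intro divide_left_mono) auto
  have "P * a / K \<ge> 2 * \<tau>" using as P K by (simp add: field_simps)
  then have Px: "P * (a / (1 + p2)) - \<tau> \<ge> P * a / (2 * K)"
    using mult_left_mono[OF x, of P] P by (simp add: field_simps)
  have pos: "P * a / (2 * K) > 0" using \<open>P * a / K \<ge> 2 * \<tau>\<close> tau K by (simp add: field_simps) (smt (verit) mult_pos_pos)
  then show "a / (1 + p2) > \<tau> / P" using Px P by (simp add: field_simps)
  assume lt: "\<eta> * (b / D * (P * (a / (1 + p2)) - \<tau>)) < \<tau>"
  have "\<eta> * (b / D * (P * a / (2 * K))) \<le> \<eta> * (b / D * (P * (a / (1 + p2)) - \<tau>))"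
    using Px eta b D by (intro mult_left_mono) auto
  also note lt
  finally have "\<eta> * (b / D * (P * a / (2 * K))) < \<tau>" .
  then have "(a * b) * (\<eta> * P) < \<tau> * (2 * K * D)" using K D by (simp add: field_simps)
  then show "a * b < 2 * K * D * \<tau> / (\<eta> * P)" using eta P by (simp add: field_simps)
qed

lemma outage_upper:
  fixes k :: nat
  assumes RD: "RD > 0" and tau: "\<tau> > 0" and eta: "\<eta> > 0" and P: "P > 0" and k: "k \<ge> 1"
    and u1: "2 * (1 + RD\<^sup>2) * (1 + d\<^sup>2) * \<tau> / (\<eta> * P) \<le> 1"
  shows "measure (system_measure N RD) {\<omega> \<in> space (system_measure N RD). SNR_DBF N d \<eta> \<tau> P \<omega> < \<tau>}
    \<le> (\<tau> * (1 + d\<^sup>2) / P) * (2 * (1 + RD\<^sup>2) * \<tau> / P + 2 * (2 * (1 + RD\<^sup>2) * (1 + d\<^sup>2) * \<tau> / (\<eta> * P))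
         + k * (2 * (1 + RD\<^sup>2) * (1 + d\<^sup>2) * \<tau> / (\<eta> * P)) powr (1 - 1 / k)) ^ N"
proof -
  interpret S: prob_space "system_measure N RD" using system_prob[OF RD] .
  define K where "K = 1 + RD\<^sup>2"
  define D where "D = 1 + d\<^sup>2"
  define u where "u = 2 * K * D * \<tau> / (\<eta> * P)"
  define s0 where "s0 = \<tau> * D / P"
  define s where "s = 2 * K * \<tau> / P"
  have Kp: "K > 0" "D > 0" by (auto simp: K_def D_def add_pos_nonneg)
  have u: "0 < u" "u \<le> 1" using u1 Kp tau eta P by (auto simp: u_def K_def D_def)
  have s0: "s0 \<ge> 0" using tau Kp P by (simp add: s0_def)
  have s: "s \<ge> 0" using tau Kp P by (simp add: s_def)
  define W where "W = Wset s u k"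
  define Bu where "Bu = (- cball (0::complex) RD) \<times> ((UNIV::complex set) \<times> (UNIV::complex set)) \<union> (UNIV::complex set) \<times> W"
  define U where "U = ball (0::complex) (sqrt s0) \<times> PiE {..<N} (\<lambda>_. Bu)"
  let ?O = "{\<omega> \<in> space (system_measure N RD). SNR_DBF N d \<eta> \<tau> P \<omega> < \<tau>}"
  have sub: "?O \<subseteq> U"
  proof
    fix \<omega> assume "\<omega> \<in> ?O"
    then have sp: "\<omega> \<in> space (system_measure N RD)" and lt: "SNR_DBF N d \<eta> \<tau> P \<omega> < \<tau>" by auto
    have ext: "snd \<omega> \<in> PiE {..<N} (\<lambda>_. UNIV)" using sp unfolding space_system mem_Times_iff by blast
    define S where "S = {i. i < N \<and> xgain (snd \<omega> i) > \<tau> / P}"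
    define f where "f i = ygain d (snd \<omega> i) * (P * xgain (snd \<omega> i) - \<tau>)" for i
    have finS: "finite S" unfolding S_def by simp
    have fnn: "f i \<ge> 0" if "i \<in> S" for i
    proof -
      have "\<tau> / P < xgain (snd \<omega> i)" using that by (simp add: S_def)
      then have "\<tau> < P * xgain (snd \<omega> i)" using P by (simp add: field_simps)
      then show ?thesis unfolding f_def using ygain_nonneg by simp
    qed
    have Tnn: "sum f S \<ge> 0" using fnn by (simp add: sum_nonneg)
    have snr: "SNR_DBF N d \<eta> \<tau> P \<omega> = P * x0gain d (fst \<omega>) + \<eta> * sum f S"
      unfolding SNR_DBF_def S_def f_def ..
    have x0nn: "P * x0gain d (fst \<omega>) \<ge> 0" using P unfolding x0gain_def by simp
    have etaT: "\<eta> * sum f S \<ge> 0" using eta Tnn by simp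
    have "P * x0gain d (fst \<omega>) < \<tau>" using lt snr etaT by linarith
    then have "P * (cmod (fst \<omega>))\<^sup>2 < \<tau> * D" using Kp unfolding x0gain_def D_def by (simp add: field_simps)
    then have "(cmod (fst \<omega>))\<^sup>2 < s0" using P unfolding s0_def by (simp add: field_simps)
    then have h0: "fst \<omega> \<in> ball 0 (sqrt s0)" using mem_ball_sqrt s0 by blast
    have etaf: "\<eta> * f i < \<tau>" if "i \<in> S" for i
    proof -
      have "f i \<le> sum f S" using that fnn finS by (intro member_le_sum) auto
      then have "\<eta> * f i \<le> \<eta> * sum f S" using eta by simp
      then show ?thesis using lt snr x0nn by linarith
    qed
    have rel: "snd \<omega> i \<in> Bu" if i: "i < N" for i
    proof -
      obtain p h g where r: "snd \<omega> i = (p, h, g)" by (cases "snd \<omega> i") auto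
      show ?thesis
      proof (cases "cmod p \<le> RD")
        case False
        then show ?thesis unfolding Bu_def r by simp
      next
        case True
        have p2: "0 \<le> (cmod p)\<^sup>2" "1 + (cmod p)\<^sup>2 \<le> K" unfolding K_def using True
          by (auto intro!: power_mono)
        have "(cmod h)\<^sup>2 < s \<or> (cmod h)\<^sup>2 * (cmod g)\<^sup>2 < u"
        proof (cases "(cmod h)\<^sup>2 < s")
          case False
          then have as: "(cmod h)\<^sup>2 \<ge> 2 * K * \<tau> / P" unfolding s_def by simp
          note RA = relay_arith[OF P tau eta Kp(2) _ _ p2 as, of "(cmod g)\<^sup>2"]
          have xg: "xgain (snd \<omega> i) = (cmod h)\<^sup>2 / (1 + (cmod p)\<^sup>2)" unfolding xgain_def r by simp
          have yg: "ygain d (snd \<omega> i) = (cmod g)\<^sup>2 / D" unfolding ygain_def r D_def by simp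
          have "i \<in> S" unfolding S_def using i RA(1) xg by simp
          then have "\<eta> * f i < \<tau>" by (rule etaf)
          then have "\<eta> * ((cmod g)\<^sup>2 / D * (P * ((cmod h)\<^sup>2 / (1 + (cmod p)\<^sup>2)) - \<tau>)) < \<tau>"
            unfolding f_def xg yg .
          then have "(cmod h)\<^sup>2 * (cmod g)\<^sup>2 < u" using RA(2) unfolding u_def by simp
          then show ?thesis by blast
        qed blast
        then have "(h, g) \<in> W" unfolding W_def by (rule in_Wset[OF k u s])
        then show ?thesis unfolding Bu_def r by simp
      qed
    qed
    have "snd \<omega> \<in> PiE {..<N} (\<lambda>_. Bu)"
      using ext rel by (auto simp: PiE_iff)
    then show "\<omega> \<in> U" unfolding U_def using h0 by (simp add: mem_Times_iff)
  qed
  have Bu_sets: "Bu \<in> sets (relay_measure RD)"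
    unfolding Bu_def sets_relay using Wset_borel[of s u k]
    by (intro sets.Un pair_measureI) (auto simp: W_def)
  have U_sets: "U \<in> sets (system_measure N RD)"
    unfolding U_def system_measure_def
    by (intro pair_measureI sets_PiM_I_finite) (use Bu_sets in auto)
  have d1: "measure (relay_measure RD) ((- cball 0 RD) \<times> (UNIV \<times> UNIV)) = 0"
    by (subst relay_measure_prod[OF RD]) (auto simp: disc_outside[OF RD])
  have d2: "measure (relay_measure RD) (UNIV \<times> W) = measure (CN01 \<Otimes>\<^sub>M CN01) W"
  proof -
    interpret Dp: prob_space "uniform_disc RD" using disc_prob[OF RD] .
    have "measure (relay_measure RD) (UNIV \<times> W) = measure (uniform_disc RD) UNIV * measure (CN01 \<Otimes>\<^sub>M CN01) W"
      unfolding relay_measure_def W_def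
      by (rule measure_pair_times[OF disc_prob[OF RD] prob_space_pair[OF CN01_prob CN01_prob] _ Wset_sets]) simp
    also have "measure (uniform_disc RD) UNIV = 1" using Dp.prob_space by (simp add: uniform_disc_def)
    finally show ?thesis by simp
  qed
  interpret R: prob_space "relay_measure RD" using relay_prob[OF RD] .
  have univ: "(UNIV::(complex\<times>complex) set) \<in> sets (borel \<Otimes>\<^sub>M borel)"
    using sets.top[of "borel \<Otimes>\<^sub>M borel :: (complex\<times>complex) measure"] by (simp add: space_pair_measure)
  have "measure (relay_measure RD) Bu \<le> measure (relay_measure RD) ((- cball 0 RD) \<times> (UNIV \<times> UNIV)) + measure (relay_measure RD) (UNIV \<times> W)"
    unfolding Bu_def
    using univ by (intro measure_Un_le) (auto simp: sets_relay W_def intro!: pair_measureI Wset_borel)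
  also have "\<dots> = measure (CN01 \<Otimes>\<^sub>M CN01) W" unfolding d1 d2 by simp
  also have "\<dots> \<le> s + 2 * u + k * u powr (1 - 1 / k)" unfolding W_def by (rule W_bound[OF k u s])
  finally have mBu: "measure (relay_measure RD) Bu \<le> s + 2 * u + k * u powr (1 - 1 / k)" .
  have "measure (system_measure N RD) ?O \<le> measure (system_measure N RD) U"
    using sub U_sets by (rule S.finite_measure_mono)
  also have "\<dots> = measure CN01 (ball 0 (sqrt s0)) * measure (relay_measure RD) Bu ^ N"
    unfolding U_def by (rule system_measure_prod[OF RD _ Bu_sets]) auto
  also have "\<dots> \<le> s0 * (s + 2 * u + k * u powr (1 - 1 / k)) ^ N"
    using mBu s0 by (intro mult_mono power_mono CN01_sq) (auto intro!: zero_le_power)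
  finally show ?thesis unfolding s0_def s_def u_def K_def D_def .
qed

lemma ev_small:
  assumes e: "e > 0"
  shows "eventually (\<lambda>P::real. 0 < ln P \<and> \<bar>C\<bar> / ln P < e) at_top"
proof -
  have "eventually (\<lambda>P::real. \<bar>C\<bar> / e + 1 \<le> ln P) at_top"
    using ln_at_top unfolding filterlim_at_top by blast
  then show ?thesis
  proof (rule eventually_mono)
    fix P :: real assume h: "\<bar>C\<bar> / e + 1 \<le> ln P"
    have p: "0 < ln P" using h e by (smt (verit) divide_nonneg_pos abs_ge_zero)
    have "\<bar>C\<bar> < e * ln P" using h e by (simp add: field_simps)
    then show "0 < ln P \<and> \<bar>C\<bar> / ln P < e" using p by (simp add: field_simps)
  qed
qed

lemma upper_ineq:
  fixes k :: nat and P c :: real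
  assumes k: "k \<ge> 1" and P: "P \<ge> 1" and c: "c > 0" and a: "a \<ge> 0"
  shows "a / P + 2 * (c / P) + k * (c / P) powr (1 - 1 / k)
     \<le> (a + 2 * c + k * c powr (1 - 1 / k)) * P powr (- (1 - 1 / k))"
proof -
  have e: "0 \<le> 1 - 1 / real k" "1 - 1 / real k \<le> 1" using k by auto
  have Pp: "P > 0" using P by simp
  have q: "1 / P \<le> P powr (- (1 - 1 / k))"
  proof -
    have "P powr (1 - 1 / k) \<le> P powr 1" using P e by (intro powr_mono) auto
    then have "1 / P \<le> 1 / P powr (1 - 1 / k)" using Pp by (intro divide_left_mono) auto
    then show ?thesis by (simp only: powr_minus_divide)
  qed
  have r: "(c / P) powr (1 - 1 / k) = c powr (1 - 1 / k) * P powr (- (1 - 1 / k))"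
  proof -
    have "(c / P) powr (1 - 1 / k) = c powr (1 - 1 / k) / P powr (1 - 1 / k)"
      using c Pp by (simp add: powr_divide)
    also have "\<dots> = c powr (1 - 1 / k) * (1 / P powr (1 - 1 / k))" by simp
    also have "1 / P powr (1 - 1 / k) = P powr (- (1 - 1 / k))" by (simp only: powr_minus_divide)
    finally show ?thesis .
  qed
  have "a / P \<le> a * P powr (- (1 - 1 / k))" using mult_left_mono[OF q a] by simp
  moreover have "c / P \<le> c * P powr (- (1 - 1 / k))" using mult_left_mono[OF q, of c] c by simp
  moreover have "(a + 2 * c + k * c powr (1 - 1 / k)) * P powr (- (1 - 1 / k))
     = a * P powr (- (1 - 1 / k)) + 2 * (c * P powr (- (1 - 1 / k))) + k * (c powr (1 - 1 / k) * P powr (- (1 - 1 / k)))"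
    by (simp only: algebra_simps)
  ultimately show ?thesis unfolding r by linarith
qed

theorem theorem3:
  fixes N :: nat and RD d \<eta> R :: real
  assumes "N \<ge> 1" and "RD > 0" and "d > 0" and "\<eta> > 0" and "\<eta> \<le> 1" and "R > 0"
  shows "((\<lambda>P. - (ln (outage_prob N RD d \<eta> R P) / ln P)) \<longlongrightarrow> real (N + 1)) at_top"
proof -
  note RD = \<open>RD > 0\<close> and eta = \<open>\<eta> > 0\<close>
  define \<tau> where "\<tau> = 2 powr (2 * R) - 1"
  have tau: "\<tau> > 0" unfolding \<tau>_def using \<open>R > 0\<close> by simp
  define D where "D = 1 + d\<^sup>2"
  define K where "K = 1 + RD\<^sup>2"
  define c where "c = 2 * K * D * \<tau> / \<eta>"
  have Dp: "D > 0" and Kp: "K > 0" by (auto simp: D_def K_def add_pos_nonneg)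
  have cp: "c > 0" using Dp Kp tau eta by (simp add: c_def)
  let ?O = "\<lambda>P. outage_prob N RD d \<eta> R P"
  have Oeq: "?O P = measure (system_measure N RD) {\<omega> \<in> space (system_measure N RD). SNR_DBF N d \<eta> \<tau> P \<omega> < \<tau>}" for P
    unfolding outage_prob_def \<tau>_def Let_def ..
  define A1 where "A1 = -1 + ln (\<tau> * D) + N * (-2 + ln \<tau>)"
  define P0 where "P0 = max (max 1 (max (\<tau> * D) \<tau>)) c"
  have low: "0 < ?O P \<and> A1 - (N + 1) * ln P \<le> ln (?O P)" if PP: "P \<ge> P0" for P
  proof -
    have P: "P > 0" "P \<ge> 1" "\<tau> * D \<le> P" "\<tau> \<le> P" using PP by (auto simp: P0_def)
    have h1: "\<tau> * (1 + d\<^sup>2) / P \<le> 1" and h2: "\<tau> / P \<le> 1" using P by (auto simp: D_def)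
    define E where "E = exp (-1) * (\<tau> * D / P) * (exp (-1) * (\<tau> / P) * exp (-1)) ^ N"
    have EO: "E \<le> ?O P" unfolding Oeq E_def D_def using outage_lower[OF RD tau P(1) h1 h2] .
    have Epos: "E > 0" unfolding E_def using tau Dp P by simp
    define X where "X = \<tau> * D / P"
    define Y where "Y = exp (-1) * (\<tau> / P) * exp (-1)"
    have Xp: "X > 0" and Yp: "Y > 0" using tau Dp P by (auto simp: X_def Y_def)
    have "ln E = ln (exp (-1) * X) + ln (Y ^ N)"
      unfolding E_def X_def[symmetric] Y_def[symmetric] using Xp Yp by (simp add: ln_mult)
    also have "\<dots> = -1 + ln X + N * ln Y" using Xp Yp by (simp add: ln_mult ln_realpow)
    also have "ln X = ln (\<tau> * D) - ln P" unfolding X_def using tau Dp P by (simp add: ln_div)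
    also have "ln Y = -2 + ln \<tau> - ln P" unfolding Y_def using tau P by (simp add: ln_mult ln_div)
    also have "-1 + (ln (\<tau> * D) - ln P) + N * (-2 + ln \<tau> - ln P) = A1 - (N + 1) * ln P"
      unfolding A1_def by (simp add: algebra_simps)
    finally have lnE: "ln E = A1 - (N + 1) * ln P" .
    have "0 < ?O P" using Epos EO by simp
    moreover have "ln E \<le> ln (?O P)" using Epos EO by simp
    ultimately show ?thesis using lnE by simp
  qed
  define Ck where "Ck k = 2 * K * \<tau> + 2 * c + real k * c powr (1 - 1 / real k)" for k :: nat
  have Ckp: "Ck k > 0" for k using Kp tau cp by (simp add: Ck_def add_pos_nonneg)
  have up: "ln (?O P) \<le> ln (\<tau> * D) + N * ln (Ck k) - (1 + N * (1 - 1 / k)) * ln P"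
    if k: "k \<ge> 1" and PP: "P \<ge> P0" for k :: nat and P
  proof -
    have P: "P > 0" "P \<ge> 1" "c \<le> P" using PP by (auto simp: P0_def)
    have ueq: "2 * (1 + RD\<^sup>2) * (1 + d\<^sup>2) * \<tau> / (\<eta> * P) = c / P"
      unfolding c_def K_def D_def by simp
    have u1: "2 * (1 + RD\<^sup>2) * (1 + d\<^sup>2) * \<tau> / (\<eta> * P) \<le> 1" unfolding ueq using P by simp
    define Q where "Q = P powr (- (1 - 1 / k))"
    have Qp: "Q > 0" using P by (simp add: Q_def)
    have "?O P \<le> (\<tau> * D / P) * (2 * K * \<tau> / P + 2 * (c / P) + k * (c / P) powr (1 - 1 / k)) ^ N"
      using outage_upper[OF RD tau eta P(1) k u1] unfolding Oeq ueq D_def K_def .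
    also have "\<dots> \<le> (\<tau> * D / P) * (Ck k * Q) ^ N"
    proof -
      have i: "2 * K * \<tau> / P + 2 * (c / P) + k * (c / P) powr (1 - 1 / k) \<le> Ck k * Q"
        unfolding Ck_def Q_def by (rule upper_ineq[OF k P(2) cp]) (use Kp tau in simp)
      have "0 \<le> 2 * K * \<tau> / P + 2 * (c / P) + k * (c / P) powr (1 - 1 / k)"
        using Kp tau cp P by simp
      then have "(2 * K * \<tau> / P + 2 * (c / P) + k * (c / P) powr (1 - 1 / k)) ^ N \<le> (Ck k * Q) ^ N"
        using i by (intro power_mono)
      then show ?thesis using tau Dp P by (intro mult_left_mono) auto
    qed
    finally have Ole: "?O P \<le> (\<tau> * D / P) * (Ck k * Q) ^ N" .
    have Opos: "0 < ?O P" using low[OF PP] by simp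
    have "ln (?O P) \<le> ln ((\<tau> * D / P) * (Ck k * Q) ^ N)"
      using Opos Ole by simp
    also have "\<dots> = ln (\<tau> * D) - ln P + N * (ln (Ck k) + ln Q)"
      using tau Dp P Qp Ckp[of k] by (simp add: ln_mult ln_div ln_realpow)
    also have "ln Q = - (1 - 1 / k) * ln P" unfolding Q_def using P by (simp add: ln_powr)
    finally show ?thesis by (simp add: algebra_simps)
  qed
  show ?thesis
  proof (rule order_tendstoI)
    fix a assume a: "a < real (N + 1)"
    define e where "e = (real (N + 1) - a) / 2"
    have e: "e > 0" using a by (simp add: e_def)
    define k where "k = nat \<lceil>N / e\<rceil> + 1"
    have k: "k \<ge> 1" by (simp add: k_def)
    have "real k > N / e" unfolding k_def by linarith
    then have Nk: "N / real k < e" using e k by (simp add: field_simps)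
    define C where "C = ln (\<tau> * D) + N * ln (Ck k)"
    have ev: "eventually (\<lambda>P. 0 < ln P \<and> \<bar>C\<bar> / ln P < e) at_top" by (rule ev_small[OF e])
    moreover have "eventually (\<lambda>P. P \<ge> P0) at_top" by (rule eventually_ge_at_top)
    ultimately show "eventually (\<lambda>P. a < - (ln (?O P) / ln P)) at_top"
    proof eventually_elim
      case (elim P)
      then have lnP: "0 < ln P" and small: "\<bar>C\<bar> / ln P < e" and PP: "P \<ge> P0" by auto
      have u: "ln (?O P) \<le> C - (1 + N * (1 - 1 / k)) * ln P" using up[OF k PP] by (simp add: C_def)
      then have "ln (?O P) / ln P \<le> (C - (1 + N * (1 - 1 / k)) * ln P) / ln P"
        using lnP by (intro divide_right_mono) auto
      also have "\<dots> = C / ln P - (1 + N - N / k)" using lnP by (simp add: field_simps)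
      finally have "- (ln (?O P) / ln P) \<ge> (1 + N - N / k) - C / ln P" by simp
      moreover have "C / ln P \<le> \<bar>C\<bar> / ln P" using lnP by (intro divide_right_mono) auto
      ultimately show ?case using small Nk unfolding e_def by simp
    qed
  next
    fix b assume b: "b > real (N + 1)"
    define e where "e = b - real (N + 1)"
    have e: "e > 0" using b by (simp add: e_def)
    have ev: "eventually (\<lambda>P. 0 < ln P \<and> \<bar>A1\<bar> / ln P < e) at_top" by (rule ev_small[OF e])
    moreover have "eventually (\<lambda>P. P \<ge> P0) at_top" by (rule eventually_ge_at_top)
    ultimately show "eventually (\<lambda>P. - (ln (?O P) / ln P) < b) at_top"
    proof eventually_elim
      case (elim P)
      then have lnP: "0 < ln P" and small: "\<bar>A1\<bar> / ln P < e" and PP: "P \<ge> P0" by auto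
      have l: "A1 - (N + 1) * ln P \<le> ln (?O P)" using low[OF PP] by simp
      then have "(A1 - (N + 1) * ln P) / ln P \<le> ln (?O P) / ln P"
        using lnP by (intro divide_right_mono) auto
      also have "(A1 - (N + 1) * ln P) / ln P = A1 / ln P - (N + 1)" using lnP by (simp add: field_simps)
      finally have "- (ln (?O P) / ln P) \<le> (N + 1) - A1 / ln P" by simp
      moreover have "- A1 / ln P \<le> \<bar>A1\<bar> / ln P" using lnP by (intro divide_right_mono) auto
      ultimately show ?case using small unfolding e_def by simp
    qed
  qed
qed

end
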